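(* Let $\mathcal{A}$ be a finite alphabet and $\mathbf{p}$ an irreducible pair on $\mathcal{A}$. If $\mathbf{q}=(q_0,q_1)$ is a pair (on some alphabet) such that the permutation $q_1\circ q_0^{-1}$ lies in the non-labeled extended Rauzy class of $\mathbf{p}$, then $\mathrm{ARF}(\mathbf{q})=\mathrm{ARF}(\mathbf{p})$.
   Context: Let $n=\#\mathcal{A}$. A pair is $\mathbf{p}=(p_0,p_1)$ with $p_0,p_1:\mathcal{A}\to\{1,\dots,n\}$ bijections. Irreducible: $p_0^{-1}\{1,\dots,k\}\ne p_1^{-1}\{1,\dots,k\}$ for $1\le k<n$. Rauzy move of type $\varepsilon$: $\varepsilon\mathbf{p}=(p'_0,p'_1)$, $p'_\varepsilon=p_\varepsilon$, and for $z=p_\varepsilon^{-1}(n)$, $p'_{1-\varepsilon}(b)=p_{1-\varepsilon}(b)$ if $p_{1-\varepsilon}(b)\le p_{1-\varepsilon}(z)$, $=p_{1-\varepsilon}(b)+1$ if $p_{1-\varepsilon}(z)<p_{1-\varepsilon}(b)<n$, $=p_{1-\varepsilon}(z)+1$ if $p_{1-\varepsilon}(b)=n$. Left Rauzy move of type $\varepsilon$: $\tilde\varepsilon\mathbf{p}=(p'_0,p'_1)$, $p'_\varepsilon=p_\varepsilon$, and for $a=p_\varepsilon^{-1}(1)$, $p'_{1-\varepsilon}(b)=p_{1-\varepsilon}(a)-1$ if $p_{1-\varepsilon}(b)=1$, $=p_{1-\varepsilon}(b)-1$ if $1<p_{1-\varepsilon}(b)<p_{1-\varepsilon}(a)$,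 unchanged otherwise. The labeled extended Rauzy class of $\mathbf{p}$ is the set of pairs reachable from $\mathbf{p}$ by Rauzy and left Rauzy moves of both types; the non-labeled extended Rauzy class is its image under $(p_0,p_1)\mapsto p_1\circ p_0^{-1}\in\mathfrak{S}_n$. Quadratic form: $\mathcal{Q}_{\mathbf{p}}(v)=\sum_{a}v_a^2+\sum_{\{a,b\}}L_{\mathbf{p}}(a,b)v_av_b \pmod 2$ for $v\in\mathbb{Z}_2^{\mathcal{A}}$, the second sum over unordered pairs of distinct letters, with $L_{\mathbf{p}}(a,b)=1$ if $(p_0(a)-p_0(b))(p_1(a)-p_1(b))<0$ and $0$ otherwise. $\mathrm{ARF}(\mathbf{p})=\#\{v\in\mathbb{Z}_2^{\mathcal{A}}:\mathcal{Q}_{\mathbf{p}}(v)=1\}$. *)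

theory Defs
  imports Main "HOL-Library.Cardinality"
begin

text \<open>A pair on a finite alphabet (the type 'a) is a pair (p0, p1) of maps
  'a => nat, each a bijection onto {1..n} with n = CARD('a).
  The type epsilon in {0,1} is encoded as bool: False = 0, True = 1.\<close>

type_synonym 'a pair = "('a \<Rightarrow> nat) \<times> ('a \<Rightarrow> nat)"

definition is_pair :: "('a::finite) pair \<Rightarrow> bool" where
  "is_pair p \<longleftrightarrow> bij_betw (fst p) UNIV {1..CARD('a)} \<and> bij_betw (snd p) UNIV {1..CARD('a)}"

definition irreducible_pair :: "('a::finite) pair \<Rightarrow> bool" where
  "irreducible_pair p \<longleftrightarrow>
     (\<forall>k. 1 \<le> k \<and> k < CARD('a) \<longrightarrow> fst p -` {1..k} \<noteq> snd p -` {1..k})"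

definition comp_of :: "bool \<Rightarrow> 'a pair \<Rightarrow> ('a \<Rightarrow> nat)" where
  "comp_of e p = (if e then snd p else fst p)"

definition set_comp :: "bool \<Rightarrow> ('a \<Rightarrow> nat) \<Rightarrow> 'a pair \<Rightarrow> 'a pair" where
  "set_comp e f p = (if e then (fst p, f) else (f, snd p))"

definition rauzy_move :: "bool \<Rightarrow> ('a::finite) pair \<Rightarrow> 'a pair" where
  "rauzy_move e p =
     (let n = CARD('a); pe = comp_of e p; po = comp_of (\<not> e) p;
          z = inv pe n;
          po' = (\<lambda>b. if po b \<le> po z then po b
                     else if po b < n then po b + 1
                     else po z + 1)
      in set_comp (\<not> e) po' p)"

definition left_rauzy_move :: "bool \<Rightarrow> ('a::finite) pair \<Rightarrow> 'a pair" where
  "left_rauzy_move e p =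
     (let pe = comp_of e p; po = comp_of (\<not> e) p;
          a = inv pe 1;
          po' = (\<lambda>b. if po b = 1 then po a - 1
                     else if 1 < po b \<and> po b < po a then po b - 1
                     else po b)
      in set_comp (\<not> e) po' p)"

definition ext_rauzy_step :: "('a::finite) pair \<Rightarrow> 'a pair \<Rightarrow> bool" where
  "ext_rauzy_step p q \<longleftrightarrow> (\<exists>e. q = rauzy_move e p \<or> q = left_rauzy_move e p)"

definition labeled_ext_class :: "('a::finite) pair \<Rightarrow> 'a pair set" where
  "labeled_ext_class p = {q. ext_rauzy_step\<^sup>*\<^sup>* p q}"

text \<open>The permutation p1 o p0^{-1} in S_n, encoded as the list of its values
  [sigma 1, ..., sigma n] (so the length records n).\<close>
definition pair_perm :: "('a::finite) pair \<Rightarrow> nat list" where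
  "pair_perm p = map (\<lambda>i. snd p (inv (fst p) i)) [1..<CARD('a) + 1]"

definition nonlabeled_ext_class :: "('a::finite) pair \<Rightarrow> nat list set" where
  "nonlabeled_ext_class p = pair_perm ` labeled_ext_class p"

definition L_pair :: "'a pair \<Rightarrow> 'a \<Rightarrow> 'a \<Rightarrow> bool" where
  "L_pair p a b \<longleftrightarrow>
     (int (fst p a) - int (fst p b)) * (int (snd p a) - int (snd p b)) < 0"

text \<open>Quadratic form mod 2; vectors v in Z_2^A encoded as 'a => bool.
  The second sum ranges over unordered pairs {a,b} of distinct letters.\<close>
definition Q_pair :: "('a::finite) pair \<Rightarrow> ('a \<Rightarrow> bool) \<Rightarrow> nat" where
  "Q_pair p v =
     ((\<Sum>a\<in>UNIV. (of_bool (v a))^2)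
      + (\<Sum>s\<in>{s::'a set. card s = 2}.
           of_bool (\<exists>a b. s = {a, b} \<and> a \<noteq> b \<and> L_pair p a b) * (\<Prod>a\<in>s. of_bool (v a))))
     mod 2"

definition ARF :: "('a::finite) pair \<Rightarrow> nat" where
  "ARF p = card {v :: 'a \<Rightarrow> bool. Q_pair p v = 1}"

end

theory Submission
  imports Defs
begin


definition Cg :: "('a \<Rightarrow> 'a \<Rightarrow> bool) \<Rightarrow> 'a set \<Rightarrow> bool" where
  "Cg R s \<longleftrightarrow> (\<exists>a b. s = {a, b} \<and> a \<noteq> b \<and> R a b)"

definition Eg :: "('a \<Rightarrow> 'a \<Rightarrow> bool) \<Rightarrow> 'a set \<Rightarrow> nat" where
  "Eg R V = card {s. card s = 2 \<and> s \<subseteq> V \<and> Cg R s}"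

definition Qg :: "('a \<Rightarrow> 'a \<Rightarrow> bool) \<Rightarrow> 'a set \<Rightarrow> nat" where
  "Qg R V = (card V + Eg R V) mod 2"

definition ARFg :: "('a::finite \<Rightarrow> 'a \<Rightarrow> bool) \<Rightarrow> nat" where
  "ARFg R = card {V. Qg R V = 1}"

lemma prod_of_bool_nat: "finite s \<Longrightarrow> (\<Prod>a\<in>s. (of_bool (v a) :: nat)) = of_bool (\<forall>a\<in>s. v a)"
  by (induction s rule: finite_induct) auto

lemma Q_pair_eq: "Q_pair (p::('a::finite) pair) v = Qg (L_pair p) {a. v a}"
proof -
  have 1: "(\<Sum>a\<in>UNIV. (of_bool (v a) :: nat)^2) = card {a. v a}"
    by (simp add: power2_eq_square)
  have 2: "(\<Sum>s\<in>{s::'a set. card s = 2}.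
           of_bool (\<exists>a b. s = {a, b} \<and> a \<noteq> b \<and> L_pair p a b) * (\<Prod>a\<in>s. (of_bool (v a)::nat)))
       = (\<Sum>s\<in>{s::'a set. card s = 2}. of_bool (Cg (L_pair p) s \<and> s \<subseteq> {a. v a}))"
    by (rule sum.cong) (auto simp: prod_of_bool_nat Cg_def card_2_iff)
  have 3: "(\<Sum>s\<in>{s::'a set. card s = 2}. (of_bool (Cg (L_pair p) s \<and> s \<subseteq> {a. v a}) :: nat))
      = Eg (L_pair p) {a. v a}"
    unfolding Eg_def by (subst sum_of_bool_eq) (auto intro!: arg_cong[where f=card])
  show ?thesis unfolding Q_pair_def Qg_def using 1 2 3 by simp
qed

lemma card_inj_image: "inj f \<Longrightarrow> A = f ` B \<Longrightarrow> card A = card B"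
  by (simp add: card_image inj_on_subset)

lemma ARF_eq: "ARF (p::('a::finite) pair) = ARFg (L_pair p)"
proof -
  have eq: "{V. Qg (L_pair p) V = 1} = (\<lambda>v. {a. v a}) ` {v. Q_pair p v = 1}"
  proof (rule set_eqI, rule iffI)
    fix V assume "V \<in> {V. Qg (L_pair p) V = 1}"
    then show "V \<in> (\<lambda>v. {a. v a}) ` {v. Q_pair p v = 1}"
      by (intro image_eqI[of _ _ "\<lambda>a. a \<in> V"]) (simp_all add: Q_pair_eq)
  qed (auto simp: Q_pair_eq)
  have ij: "inj (\<lambda>v::'a\<Rightarrow>bool. {a. v a})"
    by (auto simp: inj_def)
  show ?thesis unfolding ARF_def ARFg_def by (rule sym[OF card_inj_image[OF ij eq]])
qed

lemma Eg_insert: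
  fixes R :: "'a::finite \<Rightarrow> 'a \<Rightarrow> bool"
  assumes sym: "\<And>x y. R x y = R y x" and irr: "\<And>x. \<not> R x x" and x: "x \<notin> V"
  shows "Eg R (insert x V) = Eg R V + card {y\<in>V. R x y}"
proof -
  have fin: "finite V" "finite {s. card s = 2 \<and> s \<subseteq> V \<and> Cg R s}" by auto
  have eq: "{s. card s = 2 \<and> s \<subseteq> insert x V \<and> Cg R s} =
    {s. card s = 2 \<and> s \<subseteq> V \<and> Cg R s} \<union> (\<lambda>y. {x,y}) ` {y\<in>V. R x y}"
  proof (rule set_eqI, rule iffI)
    fix s assume "s \<in> {s. card s = 2 \<and> s \<subseteq> insert x V \<and> Cg R s}"
    then obtain a b where s: "s = {a,b}" "a \<noteq> b" "R a b" "s \<subseteq> insert x V"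
      by (auto simp: Cg_def)
    show "s \<in> {s. card s = 2 \<and> s \<subseteq> V \<and> Cg R s} \<union> (\<lambda>y. {x,y}) ` {y\<in>V. R x y}"
    proof (cases "x \<in> s")
      case False thus ?thesis using s by (auto simp: Cg_def)
    next
      case True
      then show ?thesis using s sym x by (auto simp: image_iff insert_commute)
    qed
  next
    fix s assume "s \<in> {s. card s = 2 \<and> s \<subseteq> V \<and> Cg R s} \<union> (\<lambda>y. {x,y}) ` {y\<in>V. R x y}"
    then show "s \<in> {s. card s = 2 \<and> s \<subseteq> insert x V \<and> Cg R s}"
    proof
      assume "s \<in> (\<lambda>y. {x,y}) ` {y\<in>V. R x y}"
      then obtain y where "s = {x,y}" "y \<in> V" "R x y" by auto
      moreover have "x \<noteq> y" using irr \<open>R x y\<close> by metis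
      ultimately show ?thesis by (auto simp: Cg_def)
    qed (auto simp: Cg_def)
  qed
  have "card ((\<lambda>y. {x,y}) ` {y\<in>V. R x y}) = card {y\<in>V. R x y}"
    by (rule card_image) (auto simp: inj_on_def doubleton_eq_iff)
  moreover have "{s. card s = 2 \<and> s \<subseteq> V \<and> Cg R s} \<inter> (\<lambda>y. {x,y}) ` {y\<in>V. R x y} = {}"
    using x by auto
  ultimately show ?thesis unfolding Eg_def eq
    by (subst card_Un_disjoint) (use fin in auto)
qed

lemma Eg_cong:
  assumes "\<And>a b. a \<noteq> w \<Longrightarrow> b \<noteq> w \<Longrightarrow> R a b = R' a b" and "w \<notin> V"
  shows "Eg R V = Eg R' V"
proof -
  have c: "Cg R s = Cg R' s" if "w \<notin> s" for s
  proof
    assume "Cg R s"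
    then obtain a b where "s = {a,b}" "a \<noteq> b" "R a b" by (auto simp: Cg_def)
    then show "Cg R' s" using that assms(1)[of a b] unfolding Cg_def by auto
  next
    assume "Cg R' s"
    then obtain a b where "s = {a,b}" "a \<noteq> b" "R' a b" by (auto simp: Cg_def)
    then show "Cg R s" using that assms(1)[of a b] unfolding Cg_def by auto
  qed
  show ?thesis unfolding Eg_def
    by (rule arg_cong[where f=card]) (use assms(2) c in auto)
qed

lemma card_xor:
  assumes "finite U"
  shows "card {y\<in>U. P y \<noteq> Q y} + 2 * card {y\<in>U. P y \<and> Q y} = card {y\<in>U. P y} + card {y\<in>U. Q y}"
proof -
  have c: "\<And>P. card {y\<in>U. P y} = (\<Sum>y\<in>U. (of_bool (P y)::nat))"
    using assms by (simp add: Int_def)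
  show ?thesis unfolding c
    by (simp add: sum.distrib[symmetric] sum_distrib_left) (rule sum.cong, auto)
qed

definition toggle :: "('a \<Rightarrow> 'a \<Rightarrow> bool) \<Rightarrow> 'a \<Rightarrow> 'a \<Rightarrow> 'a \<Rightarrow> 'a \<Rightarrow> bool" where
  "toggle R z w x y \<longleftrightarrow> (R x y \<noteq> ((x = w \<and> y \<noteq> w \<and> R z y) \<or> (y = w \<and> x \<noteq> w \<and> R z x)))"

definition Tm :: "'a \<Rightarrow> 'a \<Rightarrow> 'a set \<Rightarrow> 'a set" where
  "Tm z w V = (if w \<in> V then (if z \<in> V then V - {z} else insert z V) else V)"

lemma Tm_Tm: "z \<noteq> w \<Longrightarrow> Tm z w (Tm z w V) = V"
  unfolding Tm_def by auto

lemma par1: "(x::nat) + 2*y = A + B \<Longrightarrow> ((u::nat) + 1 + (e + x)) mod 2 = (u + 2 + (e + B + (A + 1))) mod 2"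
  by presburger

lemma par2: "(x::nat) + 2*y = A + B \<Longrightarrow> ((u::nat) + 2 + (e + B + (x + 1))) mod 2 = (u + 1 + (e + A)) mod 2"
  by presburger

lemma Qg_toggle:
  fixes R :: "'a::finite \<Rightarrow> 'a \<Rightarrow> bool"
  assumes sym: "\<And>x y. R x y = R y x" and irr: "\<And>x. \<not> R x x" and zw: "z \<noteq> w" "R z w"
  shows "Qg (toggle R z w) V = Qg R (Tm z w V)"
proof -
  let ?R' = "toggle R z w"
  have sym': "\<And>x y. ?R' x y = ?R' y x" using sym unfolding toggle_def by auto
  have irr': "\<And>x. \<not> ?R' x x" using irr unfolding toggle_def by auto
  have EI': "\<And>x U. x \<notin> U \<Longrightarrow> Eg ?R' (insert x U) = Eg ?R' U + card {y\<in>U. ?R' x y}"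
    by (intro Eg_insert; (rule sym' | rule irr' | assumption))
  have EI: "\<And>x U. x \<notin> U \<Longrightarrow> Eg R (insert x U) = Eg R U + card {y\<in>U. R x y}"
    by (intro Eg_insert; (rule sym | rule irr | assumption))
  have cong: "\<And>U. w \<notin> U \<Longrightarrow> Eg ?R' U = Eg R U"
    by (rule Eg_cong[where w=w]) (auto simp: toggle_def)
  show ?thesis
  proof (cases "w \<in> V")
    case False
    then show ?thesis using cong unfolding Qg_def Tm_def by simp
  next
    case True
    define U where "U = V - {w}"
    have V: "V = insert w U" "w \<notin> U" using True U_def by auto
    have fU: "finite U" by simp
    have x: "card {y\<in>U. ?R' w y} = card {y\<in>U. R w y \<noteq> R z y}"
      using V(2) by (auto simp: toggle_def intro!: arg_cong[where f=card])
    show ?thesis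
    proof (cases "z \<in> U")
      case False
      have T: "Tm z w V = insert w (insert z U)" using V False zw unfolding Tm_def by auto
      have e1: "Eg ?R' V = Eg R U + card {y\<in>U. ?R' w y}"
        using EI'[OF V(2)] cong[OF V(2)] V(1) by simp
      have e2: "Eg R (Tm z w V) = Eg R (insert z U) + card {y\<in>insert z U. R w y}"
      proof -
        have "w \<notin> insert z U" using V zw by auto
        from EI[OF this] show ?thesis using T by simp
      qed
      have e3: "Eg R (insert z U) = Eg R U + card {y\<in>U. R z y}"
        using EI[OF False] .
      have e4: "{y\<in>insert z U. R w y} = insert z {y\<in>U. R w y}"
        using zw sym by auto
      have e5: "card {y\<in>insert z U. R w y} = card {y\<in>U. R w y} + 1"
        unfolding e4 using False by simp
      have c1: "card V = card U + 1" "card (Tm z w V) = card U + 2"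
        using V T False zw by auto
      have k: "card {y\<in>U. R w y \<noteq> R z y} + 2 * card {y\<in>U. R w y \<and> R z y} = card {y\<in>U. R w y} + card {y\<in>U. R z y}"
        by (rule card_xor[OF fU])
      show ?thesis unfolding Qg_def c1 e1 e2 e3 e5 x
        by (rule par1[OF k])
    next
      case True
      define U' where "U' = U - {z}"
      have U: "U = insert z U'" "z \<notin> U'" "w \<notin> U'" using True V(2) unfolding U'_def by auto
      have T: "Tm z w V = insert w U'" using V U zw unfolding Tm_def by auto
      have e1: "Eg ?R' V = Eg R U + card {y\<in>U. ?R' w y}"
        using EI'[OF V(2)] cong[OF V(2)] V(1) by simp
      have e2: "Eg R (Tm z w V) = Eg R U' + card {y\<in>U'. R w y}"
        using EI[OF U(3)] T by simp
      have e3: "Eg R U = Eg R U' + card {y\<in>U'. R z y}"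
        using EI[OF U(2)] U(1) by simp
      have e4: "{y\<in>U. R w y \<noteq> R z y} = insert z {y\<in>U'. R w y \<noteq> R z y}"
        using zw sym irr U by auto
      have e5: "card {y\<in>U. R w y \<noteq> R z y} = card {y\<in>U'. R w y \<noteq> R z y} + 1"
        unfolding e4 using U by simp
      have c1: "card V = card U' + 2" "card (Tm z w V) = card U' + 1"
        using V T U zw by auto
      have fU': "finite U'" by simp
      have k: "card {y\<in>U'. R w y \<noteq> R z y} + 2 * card {y\<in>U'. R w y \<and> R z y} = card {y\<in>U'. R w y} + card {y\<in>U'. R z y}"
        by (rule card_xor[OF fU'])
      show ?thesis unfolding Qg_def c1 e1 e2 e3 x e5
        by (rule par2[OF k])
    qed
  qed
qed

lemma ARFg_toggle:
  fixes R :: "'a::finite \<Rightarrow> 'a \<Rightarrow> bool"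
  assumes sym: "\<And>x y. R x y = R y x" and irr: "\<And>x. \<not> R x x" and zw: "z \<noteq> w" "R z w"
  shows "ARFg (toggle R z w) = ARFg R"
proof -
  have "{V. Qg (toggle R z w) V = 1} = Tm z w ` {V. Qg R V = 1}"
    using Qg_toggle[OF assms] Tm_Tm[OF zw(1)] by (auto simp: image_iff)
  moreover have "inj (Tm z w)" by (metis Tm_Tm[OF zw(1)] injI)
  ultimately show ?thesis unfolding ARFg_def
    using card_inj_image by blast
qed

lemma image_set_surj:
  assumes "bij h" shows "{s. P s} = image h ` {t. P (h ` t)}"
proof -
  have e: "\<And>s. s = h ` (h -` s)" using assms by (simp add: bij_is_surj surj_image_vimage_eq)
  show ?thesis
  proof (rule set_eqI, rule iffI)
    fix s assume "s \<in> {s. P s}"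
    then show "s \<in> image h ` {t. P (h ` t)}"
      by (intro image_eqI[of _ _ "h -` s"]) (use e[of s] in auto)
  qed auto
qed

lemma Cg_image:
  assumes ih: "inj h" and R': "\<And>x y. R' x y = R (h x) (h y)"
  shows "Cg R (h ` t) = Cg R' t"
proof
  assume "Cg R (h ` t)"
  then obtain a b where ab: "h ` t = {a,b}" "a \<noteq> b" "R a b" by (auto simp: Cg_def)
  then have "a \<in> h ` t" "b \<in> h ` t" by auto
  then obtain a' b' where a'b': "a = h a'" "b = h b'" by auto
  then have "h ` t = h ` {a', b'}" using ab by simp
  then have "t = {a',b'}" by (rule inj_image_eq_iff[OF ih, THEN iffD1])
  then show "Cg R' t" using ab a'b' R' unfolding Cg_def by auto
next
  assume "Cg R' t"
  then obtain a b where ab: "t = {a,b}" "a \<noteq> b" "R' a b" by (auto simp: Cg_def)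
  moreover have "h a \<noteq> h b" using ih ab by (auto simp: inj_eq)
  ultimately show "Cg R (h ` t)" using R' unfolding Cg_def by auto
qed

lemma ARFg_relabel:
  fixes R :: "'a::finite \<Rightarrow> 'a \<Rightarrow> bool" and h :: "'b::finite \<Rightarrow> 'a"
  assumes h: "bij h" and R': "\<And>x y. R' x y = R (h x) (h y)"
  shows "ARFg R' = ARFg R"
proof -
  have ih: "inj h" using h bij_is_inj by auto
  have ihh: "inj (image h)" using ih by (simp add: inj_image_eq_iff inj_on_def)
  have ci: "card (h ` t) = card t" for t using ih by (simp add: card_image inj_on_subset)
  have Q: "Qg R (h ` V) = Qg R' V" for V
  proof -
    have "{s. card s = 2 \<and> s \<subseteq> h ` V \<and> Cg R s} = image h ` {t. card t = 2 \<and> t \<subseteq> V \<and> Cg R' t}"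
      by (subst image_set_surj[OF h]) (simp add: ci inj_image_subset_iff[OF ih] Cg_image[where R=R and R'=R', OF ih R'])
    then have "Eg R (h ` V) = Eg R' V" unfolding Eg_def
      by (rule card_inj_image[OF ihh])
    then show ?thesis unfolding Qg_def ci by simp
  qed
  have "{V. Qg R V = 1} = image h ` {V. Qg R' V = 1}"
    by (subst image_set_surj[OF h]) (simp add: Q)
  from card_inj_image[OF ihh this] show ?thesis unfolding ARFg_def by simp
qed



definition cross :: "('a \<Rightarrow> nat) \<Rightarrow> ('a \<Rightarrow> nat) \<Rightarrow> 'a \<Rightarrow> 'a \<Rightarrow> bool" where
  "cross f g x y \<longleftrightarrow> (int (f x) - int (f y)) * (int (g x) - int (g y)) < 0"

lemma L_pair_cross: "L_pair p = cross (fst p) (snd p)"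
  by (intro ext) (simp add: L_pair_def cross_def)

lemma cross_swap: "cross f g = cross g f"
  by (intro ext) (simp add: cross_def mult.commute)

lemma cross_iff: "cross f g x y \<longleftrightarrow> (f x < f y \<and> g y < g x) \<or> (f y < f x \<and> g x < g y)"
  by (auto simp: cross_def mult_less_0_iff)

lemma cross_sym: "cross f g x y = cross f g y x"
  by (auto simp: cross_iff)

lemma cross_irr: "\<not> cross f g x x"
  by (auto simp: cross_iff)

lemma bij_onto:
  fixes f :: "'a::finite \<Rightarrow> nat"
  assumes "inj f" "\<And>x. f x \<in> {1..n}" "CARD('a) = n"
  shows "bij_betw f UNIV {1..n}"
proof -
  have "f ` UNIV \<subseteq> {1..n}" using assms(2) by auto
  moreover have "card (f ` UNIV) = card {1..n}" using assms(1,3) by (simp add: card_image)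
  ultimately have "f ` UNIV = {1..n}" by (intro card_subset_eq) auto
  then show ?thesis using assms(1) by (simp add: bij_betw_def)
qed

lemma bij_facts:
  fixes f :: "'a::finite \<Rightarrow> nat"
  assumes "bij_betw f UNIV {1..n}"
  shows "inj f" "\<And>x. 1 \<le> f x" "\<And>x. f x \<le> n" "CARD('a) = n"
    "\<And>y. 1 \<le> y \<Longrightarrow> y \<le> n \<Longrightarrow> f (inv f y) = y" "1 \<le> n"
proof -
  show "inj f" using assms bij_betw_imp_inj_on by blast
  show "\<And>x. 1 \<le> f x" "\<And>x. f x \<le> n" using assms by (auto dest: bij_betwE)
  show c: "CARD('a) = n" using bij_betw_same_card[OF assms] by simp
  show "\<And>y. 1 \<le> y \<Longrightarrow> y \<le> n \<Longrightarrow> f (inv f y) = y"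
    using assms by (metis atLeastAtMost_iff bij_betw_imp_surj_on f_inv_into_f)
  have "0 < CARD('a)" by (rule finite_UNIV_card_ge_0) simp
  then show "1 \<le> n" using c by simp
qed

lemma right_move:
  fixes pe po :: "'a::finite \<Rightarrow> nat"
  assumes bpe: "bij_betw pe UNIV {1..n}" and bpo: "bij_betw po UNIV {1..n}"
  defines "z \<equiv> inv pe n" and "w \<equiv> inv po n"
  defines "po' \<equiv> (\<lambda>b. if po b \<le> po z then po b else if po b < n then po b + 1 else po z + 1)"
  shows "bij_betw po' UNIV {1..n}" "\<And>x. po' x = 1 \<longleftrightarrow> po x = 1"
    "z = w \<Longrightarrow> po' = po"
    "z \<noteq> w \<Longrightarrow> cross pe po' = toggle (cross pe po) z w"
    "z \<noteq> w \<Longrightarrow> cross pe po z w"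
proof -
  note e = bij_facts[OF bpe] and o = bij_facts[OF bpo]
  have pez: "pe z = n" unfolding z_def using e(5)[of n] e(6) by simp
  have pow: "po w = n" unfolding w_def using o(5)[of n] o(6) by simp
  have ie: "\<And>x y. pe x = pe y \<longleftrightarrow> x = y" and io: "\<And>x y. po x = po y \<longleftrightarrow> x = y"
    using e(1) o(1) by (auto simp: inj_eq)
  have bo: "\<And>x. 1 \<le> po x \<and> po x \<le> n" and be: "\<And>x. 1 \<le> pe x \<and> pe x \<le> n" using e o by auto
  have inj': "inj po'"
  proof (rule injI)
    fix x y assume "po' x = po' y"
    then show "x = y" using bo[of x] bo[of y] bo[of z] io[of x y] io[of x w] io[of y w] pow
      unfolding po'_def by (auto split: if_splits)
  qed
  show "bij_betw po' UNIV {1..n}"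
  proof (rule bij_onto[OF inj'])
    fix x show "po' x \<in> {1..n}" using bo[of x] bo[of z] by (auto simp: po'_def)
  qed (rule o(4))
  show "po' x = 1 \<longleftrightarrow> po x = 1" for x using bo[of x] bo[of z] unfolding po'_def by auto
  show "po' = po" if "z = w"
  proof
    fix x show "po' x = po x" using bo[of x] pow that unfolding po'_def by auto
  qed
  show "z \<noteq> w \<Longrightarrow> cross pe po z w"
    using pez pow be[of w] bo[of z] ie[of z w] io[of z w] by (auto simp: cross_iff)
  assume zw: "z \<noteq> w"
  have ord: "po' x < po' y \<longleftrightarrow> po x < po y" if "x \<noteq> w" "y \<noteq> w" for x y
    using that bo[of x] bo[of y] io[of x w] io[of y w] pow unfolding po'_def by auto
  have ow1: "po' y < po' w \<longleftrightarrow> po y \<le> po z" if "y \<noteq> w" for y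
    using that bo[of y] bo[of z] io[of y w] io[of z w] zw pow unfolding po'_def by auto
  have ow2: "po' w < po' y \<longleftrightarrow> po z < po y" if "y \<noteq> w" for y
    using that bo[of y] bo[of z] io[of y w] io[of z w] zw pow unfolding po'_def by auto
  have pw: "po y < po w" if "y \<noteq> w" for y
    using that bo[of y] io[of y w] pow by auto
  have cz: "cross pe po z y \<longleftrightarrow> po z < po y" for y
    using pez be[of y] ie[of y z] unfolding cross_iff by auto
  have cw: "cross pe po' w y \<longleftrightarrow> cross pe po w y \<noteq> cross pe po z y" if "y \<noteq> w" for y
  proof -
    have "pe y \<noteq> pe w" using ie[of y w] that by simp
    have a: "cross pe po w y \<longleftrightarrow> pe w < pe y" using pw[OF that] unfolding cross_iff by auto
    have b: "cross pe po' w y \<longleftrightarrow> (pe w < pe y \<and> po y \<le> po z) \<or> (pe y < pe w \<and> po z < po y)"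
      unfolding cross_iff using ow1[OF that] ow2[OF that] by auto
    show ?thesis unfolding a b cz using \<open>pe y \<noteq> pe w\<close> by auto
  qed
  show "cross pe po' = toggle (cross pe po) z w"
  proof (intro ext)
    fix x y
    show "cross pe po' x y = toggle (cross pe po) z w x y"
    proof (cases "x = w")
      case True
      then show ?thesis
      proof (cases "y = w")
        case True then show ?thesis using \<open>x = w\<close> by (simp add: toggle_def cross_irr)
      next
        case False then show ?thesis using \<open>x = w\<close> cw[OF False] by (simp add: toggle_def)
      qed
    next
      case False
      then show ?thesis
      proof (cases "y = w")
        case True then show ?thesis using \<open>x \<noteq> w\<close> cw[OF \<open>x \<noteq> w\<close>]
          by (simp add: toggle_def cross_sym[of _ _ x w])
      next
        case yw: False
        have "cross pe po' x y = cross pe po x y"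
          unfolding cross_iff using ord[OF False yw] ord[OF yw False] by simp
        then show ?thesis using False yw by (simp add: toggle_def)
      qed
    qed
  qed
qed

lemma left_move:
  fixes pe po :: "'a::finite \<Rightarrow> nat"
  assumes bpe: "bij_betw pe UNIV {1..n}" and bpo: "bij_betw po UNIV {1..n}"
  defines "a \<equiv> inv pe 1" and "w \<equiv> inv po 1"
  defines "po' \<equiv> (\<lambda>b. if po b = 1 then po a - 1 else if 1 < po b \<and> po b < po a then po b - 1 else po b)"
  assumes aw: "a \<noteq> w"
  shows "bij_betw po' UNIV {1..n}" "\<And>x. po' x = 1 \<Longrightarrow> pe x \<noteq> 1"
    "cross pe po' = toggle (cross pe po) a w"
    "cross pe po a w"
proof -
  note e = bij_facts[OF bpe] and o = bij_facts[OF bpo]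
  have pea: "pe a = 1" unfolding a_def using e(5)[of 1] e(6) by simp
  have pow: "po w = 1" unfolding w_def using o(5)[of 1] o(6) by simp
  have ie: "\<And>x y. pe x = pe y \<longleftrightarrow> x = y" and io: "\<And>x y. po x = po y \<longleftrightarrow> x = y"
    using e(1) o(1) by (auto simp: inj_eq)
  have bo: "\<And>x. 1 \<le> po x \<and> po x \<le> n" and be: "\<And>x. 1 \<le> pe x \<and> pe x \<le> n" using e o by auto
  have poa: "2 \<le> po a" using bo[of a] io[of a w] pow aw by auto
  have ord: "po' x < po' y \<longleftrightarrow> po x < po y" if "x \<noteq> w" "y \<noteq> w" for x y
    using that bo[of x] bo[of y] io[of x w] io[of y w] pow unfolding po'_def by auto
  have ow1: "po' y < po' w \<longleftrightarrow> po y < po a" if "y \<noteq> w" for y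
    using that bo[of y] io[of y w] pow poa unfolding po'_def by auto
  have ow2: "po' w < po' y \<longleftrightarrow> \<not> po y < po a" if "y \<noteq> w" for y
    using that bo[of y] io[of y w] pow poa unfolding po'_def by auto
  have pw: "po w < po y" if "y \<noteq> w" for y
    using that bo[of y] io[of y w] pow by auto
  have inj': "inj po'"
  proof (rule injI)
    fix x y assume xy: "po' x = po' y"
    show "x = y"
    proof (cases "x = w")
      case True
      show ?thesis
      proof (rule ccontr)
        assume "x \<noteq> y"
        then have yw: "y \<noteq> w" using True by simp
        show False using ow1[OF yw] ow2[OF yw] xy True by simp
      qed
    next
      case False
      then show ?thesis
      proof (cases "y = w")
        case True then show ?thesis using xy ow1[OF False] ow2[OF False] by simp
      next
        case yw: False
        have "po x = po y" using xy ord[OF False yw] ord[OF yw False] by (metis less_irrefl linorder_neqE_nat)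
        then show ?thesis using io by simp
      qed
    qed
  qed
  show "bij_betw po' UNIV {1..n}"
  proof (rule bij_onto[OF inj'])
    fix x show "po' x \<in> {1..n}" using bo[of x] bo[of a] poa by (auto simp: po'_def)
  qed (rule o(4))
  show "pe x \<noteq> 1" if "po' x = 1" for x
  proof
    assume "pe x = 1"
    then have "x = a" using pea ie by metis
    then show False using that poa pow io[of a w] aw unfolding po'_def by auto
  qed
  have cz: "cross pe po a y \<longleftrightarrow> po y < po a" for y
    using pea be[of y] ie[of y a] unfolding cross_iff by auto
  show "cross pe po a w" using cz[of w] pow poa by simp
  have cw: "cross pe po' w y \<longleftrightarrow> cross pe po w y \<noteq> cross pe po a y" if "y \<noteq> w" for y
  proof -
    have "pe y \<noteq> pe w" using ie[of y w] that by simp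
    have a: "cross pe po w y \<longleftrightarrow> pe y < pe w" using pw[OF that] unfolding cross_iff by auto
    have b: "cross pe po' w y \<longleftrightarrow> (pe w < pe y \<and> po y < po a) \<or> (pe y < pe w \<and> \<not> po y < po a)"
      unfolding cross_iff using ow1[OF that] ow2[OF that] by auto
    show ?thesis unfolding a b cz using \<open>pe y \<noteq> pe w\<close> by auto
  qed
  show "cross pe po' = toggle (cross pe po) a w"
  proof (intro ext)
    fix x y
    show "cross pe po' x y = toggle (cross pe po) a w x y"
    proof (cases "x = w")
      case True
      then show ?thesis
      proof (cases "y = w")
        case True then show ?thesis using \<open>x = w\<close> by (simp add: toggle_def cross_irr)
      next
        case False then show ?thesis using \<open>x = w\<close> cw[OF False] by (simp add: toggle_def)
      qed
    next
      case False
      then show ?thesis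
      proof (cases "y = w")
        case True then show ?thesis using \<open>x \<noteq> w\<close> cw[OF \<open>x \<noteq> w\<close>]
          by (simp add: toggle_def cross_sym[of _ _ x w])
      next
        case yw: False
        have "cross pe po' x y = cross pe po x y"
          unfolding cross_iff using ord[OF False yw] ord[OF yw False] by simp
        then show ?thesis using False yw by (simp add: toggle_def)
      qed
    qed
  qed
qed



definition invI :: "('a::finite) pair \<Rightarrow> bool" where
  "invI p \<longleftrightarrow> is_pair p \<and> (\<forall>x. fst p x = 1 \<longrightarrow> snd p x \<noteq> 1)"

lemma ARFg_cross_toggle:
  assumes "z \<noteq> w" "cross pe po z w"
  shows "ARFg (toggle (cross pe po) z w) = ARFg (cross (pe::'a::finite \<Rightarrow> nat) po)"
  by (rule ARFg_toggle, rule cross_sym, rule cross_irr, (fact assms)+)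

lemma rm_F: "rauzy_move False (p::('a::finite) pair) = (fst p, (\<lambda>b. if snd p b \<le> snd p (inv (fst p) CARD('a)) then snd p b
   else if snd p b < CARD('a) then snd p b + 1 else snd p (inv (fst p) CARD('a)) + 1))"
  by (simp add: rauzy_move_def Let_def comp_of_def set_comp_def)

lemma rm_T: "rauzy_move True (p::('a::finite) pair) = ((\<lambda>b. if fst p b \<le> fst p (inv (snd p) CARD('a)) then fst p b
   else if fst p b < CARD('a) then fst p b + 1 else fst p (inv (snd p) CARD('a)) + 1), snd p)"
  by (simp add: rauzy_move_def Let_def comp_of_def set_comp_def)

lemma lm_F: "left_rauzy_move False (p::('a::finite) pair) = (fst p, (\<lambda>b. if snd p b = 1 then snd p (inv (fst p) 1) - 1
   else if 1 < snd p b \<and> snd p b < snd p (inv (fst p) 1) then snd p b - 1 else snd p b))"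
  by (simp only: left_rauzy_move_def Let_def comp_of_def set_comp_def if_True if_False not_False_eq_True not_True_eq_False)

lemma lm_T: "left_rauzy_move True (p::('a::finite) pair) = ((\<lambda>b. if fst p b = 1 then fst p (inv (snd p) 1) - 1
   else if 1 < fst p b \<and> fst p b < fst p (inv (snd p) 1) then fst p b - 1 else fst p b), snd p)"
  by (simp only: left_rauzy_move_def Let_def comp_of_def set_comp_def if_True if_False not_False_eq_True not_True_eq_False)

lemma step_inv:
  fixes p q :: "('a::finite) pair"
  assumes I: "invI p" and st: "ext_rauzy_step p q"
  shows "invI q \<and> ARF q = ARF p"
proof -
  have b0: "bij_betw (fst p) UNIV {1..CARD('a)}" and b1: "bij_betw (snd p) UNIV {1..CARD('a)}"
    and f1: "\<And>x. fst p x = 1 \<Longrightarrow> snd p x \<noteq> 1"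
    using I unfolding invI_def is_pair_def by auto
  have Lp: "L_pair p = cross (fst p) (snd p)" "L_pair p = cross (snd p) (fst p)"
    using L_pair_cross cross_swap by metis+
  obtain e where "q = rauzy_move e p \<or> q = left_rauzy_move e p" using st ext_rauzy_step_def by blast
  then consider "q = rauzy_move False p" | "q = rauzy_move True p" | "q = left_rauzy_move False p"
    | "q = left_rauzy_move True p" by (cases e) auto
  then show ?thesis
  proof cases
    case 1
    note R = right_move[OF b0 b1]
    show ?thesis
    proof (cases "inv (fst p) CARD('a) = inv (snd p) CARD('a)")
      case True
      then have "q = p" using 1 R(3) by (simp add: rm_F)
      then show ?thesis using I by simp
    next
      case False
      have "invI q" using 1 R(1,2) b0 f1 by (simp add: rm_F invI_def is_pair_def)
      moreover have "ARF q = ARF p"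
        using 1 R(4)[OF False] ARFg_cross_toggle[OF False R(5)[OF False]]
        by (simp add: rm_F ARF_eq L_pair_cross)
      ultimately show ?thesis ..
    qed
  next
    case 2
    note R = right_move[OF b1 b0]
    show ?thesis
    proof (cases "inv (snd p) CARD('a) = inv (fst p) CARD('a)")
      case True
      then have "q = p" using 2 R(3) by (simp add: rm_T)
      then show ?thesis using I by simp
    next
      case False
      have "invI q" using 2 R(1,2) b1 f1 by (simp add: rm_T invI_def is_pair_def)
      moreover have "ARF q = ARF p"
        using 2 R(4)[OF False] ARFg_cross_toggle[OF False R(5)[OF False]] Lp(2)
        by (simp add: rm_T ARF_eq L_pair_cross cross_swap[of _ "snd p"])
      ultimately show ?thesis ..
    qed
  next
    case 3
    have aw: "inv (fst p) 1 \<noteq> inv (snd p) 1"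
    proof
      assume eq: "inv (fst p) 1 = inv (snd p) 1"
      have "fst p (inv (fst p) 1) = 1" "snd p (inv (snd p) 1) = 1"
        using bij_facts(5,6)[OF b0] bij_facts(5,6)[OF b1] by auto
      then show False using f1 eq by metis
    qed
    note R = left_move[OF b0 b1 aw]
    have "invI q" using 3 R(1,2) b0 by (auto simp: lm_F invI_def is_pair_def)
    moreover have "ARF q = ARF p"
      using 3 R(3) ARFg_cross_toggle[OF aw R(4)]
      by (simp add: lm_F ARF_eq L_pair_cross)
    ultimately show ?thesis ..
  next
    case 4
    have aw: "inv (snd p) 1 \<noteq> inv (fst p) 1"
    proof
      assume eq: "inv (snd p) 1 = inv (fst p) 1"
      have "fst p (inv (fst p) 1) = 1" "snd p (inv (snd p) 1) = 1"
        using bij_facts(5,6)[OF b0] bij_facts(5,6)[OF b1] by auto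
      then show False using f1 eq by metis
    qed
    note R = left_move[OF b1 b0 aw]
    have "invI q" using 4 R(1,2) b1 by (auto simp: lm_T invI_def is_pair_def)
    moreover have "ARF q = ARF p"
      using 4 R(3) ARFg_cross_toggle[OF aw R(4)] Lp(2)
      by (simp add: lm_T ARF_eq L_pair_cross cross_swap[of _ "snd p"])
    ultimately show ?thesis ..
  qed
qed

lemma class_inv:
  fixes p r :: "('a::finite) pair"
  assumes "ext_rauzy_step\<^sup>*\<^sup>* p r" "invI p"
  shows "invI r \<and> ARF r = ARF p"
  using assms by (induction rule: rtranclp_induct) (auto dest: step_inv)



lemma pair_perm_len: "length (pair_perm (p::('a::finite) pair)) = CARD('a)"
  by (simp add: pair_perm_def)

lemma pair_perm_nth: "1 \<le> i \<Longrightarrow> i \<le> CARD('a) \<Longrightarrow> pair_perm (p::('a::finite) pair) ! (i - 1) = snd p (inv (fst p) i)"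
proof -
  assume "1 \<le> i" "i \<le> CARD('a)"
  then have "[1..<CARD('a) + 1] ! (i - 1) = i" by (subst nth_upt) auto
  then show ?thesis using \<open>1 \<le> i\<close> \<open>i \<le> CARD('a)\<close> unfolding pair_perm_def
    by (subst nth_map) auto
qed

lemma bij_of_inj_card:
  fixes h :: "'b::finite \<Rightarrow> 'a::finite"
  assumes "inj h" "CARD('b) = CARD('a)"
  shows "bij h"
proof -
  have "card (h ` UNIV) = CARD('a)" using assms by (simp add: card_image)
  then have "h ` UNIV = UNIV" by (intro card_eq_UNIV_imp_eq_UNIV) simp_all
  then show ?thesis using assms(1) by (simp add: bij_def)
qed

lemma relabel_ARF:
  fixes r :: "('a::finite) pair" and q :: "('b::finite) pair"
  assumes r: "is_pair r" and q: "is_pair q" and pp: "pair_perm r = pair_perm q"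
  shows "ARF q = ARF r"
proof -
  have c: "CARD('b) = CARD('a)" using pair_perm_len[of r] pair_perm_len[of q] pp by simp
  have r0: "bij_betw (fst r) UNIV {1..CARD('a)}" and q0: "bij_betw (fst q) UNIV {1..CARD('b)}"
    using r q unfolding is_pair_def by auto
  define h where "h x = inv (fst r) (fst q x)" for x
  have bq: "1 \<le> fst q x" "fst q x \<le> CARD('a)" for x using bij_facts(2,3)[OF q0] c by auto
  have fr: "fst r (h x) = fst q x" for x unfolding h_def using bij_facts(5)[OF r0] bq[of x] by simp
  have sr: "snd r (h x) = snd q x" for x
  proof -
    have "snd r (h x) = pair_perm r ! (fst q x - 1)"
      using pair_perm_nth[of "fst q x" r] bq[of x] unfolding h_def by simp
    also have "\<dots> = pair_perm q ! (fst q x - 1)" using pp by simp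
    also have "\<dots> = snd q (inv (fst q) (fst q x))"
      using pair_perm_nth[of "fst q x" q] bq[of x] c by simp
    also have "\<dots> = snd q x" using bij_facts(1)[OF q0] by simp
    finally show ?thesis .
  qed
  have "inj h"
  proof (rule injI)
    fix x y assume "h x = h y"
    then have "fst q x = fst q y" using fr by metis
    then show "x = y" using bij_facts(1)[OF q0] by (simp add: inj_eq)
  qed
  then have bh: "bij h" using bij_of_inj_card c by blast
  have "ARFg (L_pair q) = ARFg (L_pair r)"
    by (rule ARFg_relabel[OF bh]) (simp add: L_pair_def fr sr)
  then show ?thesis by (simp add: ARF_eq)
qed

theorem corollary2p20:
  fixes p :: "('a::finite \<Rightarrow> nat) \<times> ('a \<Rightarrow> nat)"
    and q :: "('b::finite \<Rightarrow> nat) \<times> ('b \<Rightarrow> nat)"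
  assumes "is_pair p" and "irreducible_pair p"
    and "is_pair q"
    and "pair_perm q \<in> nonlabeled_ext_class p"
  shows "ARF q = ARF p"
proof -
  obtain r where rc: "ext_rauzy_step\<^sup>*\<^sup>* p r" and pr: "pair_perm r = pair_perm q"
    using assms(4) unfolding nonlabeled_ext_class_def labeled_ext_class_def by auto
  have c: "CARD('b) = CARD('a)" using pair_perm_len[of r] pair_perm_len[of q] pr by simp
  have b0: "bij_betw (fst p) UNIV {1..CARD('a)}" and b1: "bij_betw (snd p) UNIV {1..CARD('a)}"
    using assms(1) unfolding is_pair_def by auto
  show ?thesis
  proof (cases "2 \<le> CARD('a)")
    case True
    have "\<not> (fst p x = 1 \<and> snd p x = 1)" for x
    proof
      assume x: "fst p x = 1 \<and> snd p x = 1"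
      have f: "fst p y = 1 \<longleftrightarrow> y = x" for y using x bij_facts(1)[OF b0] by (metis injD)
      have g: "snd p y = 1 \<longleftrightarrow> y = x" for y using x bij_facts(1)[OF b1] by (metis injD)
      have "fst p -` {1..1} = {x}" "snd p -` {1..1} = {x}"
        using f g by auto
      then show False using assms(2) True unfolding irreducible_pair_def by force
    qed
    then have "invI p" using assms(1) unfolding invI_def by auto
    from class_inv[OF rc this] have "is_pair r" "ARF r = ARF p" unfolding invI_def by auto
    with relabel_ARF[OF this(1) assms(3) pr] show ?thesis by simp
  next
    case False
    have c1: "CARD('a) = 1" using False bij_facts(6)[OF b0] by linarith
    obtain h :: "'b \<Rightarrow> 'a" where h: "bij_betw h UNIV UNIV"
      using finite_same_card_bij[of "UNIV::'b set" "UNIV::'a set"] c by auto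
    have allb: "x = y" for x y :: 'b using c c1 by (metis card_1_singletonE singletonD UNIV_I)
    have alla: "x = y" for x y :: 'a using c1 by (metis card_1_singletonE singletonD UNIV_I)
    have "ARFg (L_pair q) = ARFg (L_pair p)"
    proof (rule ARFg_relabel[OF h])
      fix x y
      have "y = x" "h y = h x" using allb alla by blast+
      then show "L_pair q x y = L_pair p (h x) (h y)" by (simp add: L_pair_def)
    qed
    then show ?thesis by (simp add: ARF_eq)
  qed
qed

end
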